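(* Let $n\ge 2$, $1\le p<\infty$, $0<s<1$, and fix $N\in[1,\infty)$. Let $\hat U=\{x\in\mathbb{R}^n:\|x\|_N\le 1\}$ and let $U=\tfrac{\ell_U}{2}\hat U+q$ for some $\ell_U>0$ and $q\in\mathbb{R}^n$. For $1\le i<j\le n$ let ${\bf I}_{ij}:\mathbb{R}^n\to\mathbb{R}^n$ be the linear map ${\bf I}_{ij}(x)=I_{ij}x$. Then $$|{\bf I}_{ij}|_{W^{s,p}(U)^n}=\hat C\,\ell_U^{\frac np+1-s},$$ where $\hat C$ is a constant depending on $n,p,s$ (and $N$) but not on $i,j$, $\ell_U$ or $q$.
   Context: $\|x\|_N=(\sum_{k=1}^n|x_k|^N)^{1/N}$. $I_{ij}\in\mathbb{R}^{n\times n}$ is the matrix with $(I_{ij})_{ij}=1$, $(I_{ij})_{ji}=-1$ and all other entries $0$. For a set $E$ and a vector field ${\bf v}$, $|{\bf v}|_{W^{s,p}(E)^n}=\left(\int_E\int_E\frac{|{\bf v}(x)-{\bf v}(y)|^p}{|x-y|^{n+sp}}\,dy\,dx\right)^{1/p}$. *)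

theory Defs
  imports "HOL-Analysis.Analysis"
begin

definition pnormN :: "real \<Rightarrow> real ^ 'n \<Rightarrow> real" where
  "pnormN N x = (\<Sum>k\<in>UNIV. \<bar>x $ k\<bar> powr N) powr (1 / N)"

definition hatU :: "real \<Rightarrow> (real ^ 'n) set" where
  "hatU N = {x. pnormN N x \<le> 1}"

definition cellU :: "real \<Rightarrow> real \<Rightarrow> real ^ 'n \<Rightarrow> (real ^ 'n) set" where
  "cellU N l q = (\<lambda>x. (l / 2) *\<^sub>R x + q) ` hatU N"

definition Imat :: "'n \<Rightarrow> 'n \<Rightarrow> real ^ 'n ^ 'n" where
  "Imat i j = (\<chi> a b. if a = i \<and> b = j then 1 else if a = j \<and> b = i then -1 else 0)"

definition Wsp_seminorm ::
  "real \<Rightarrow> real \<Rightarrow> (real ^ 'n) set \<Rightarrow> (real ^ 'n \<Rightarrow> real ^ 'n) \<Rightarrow> real" where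
  "Wsp_seminorm s p E v =
     (LINT x:E|lborel. LINT y:E|lborel.
        norm (v x - v y) powr p / norm (x - y) powr (real CARD('n) + s * p)) powr (1 / p)"

end

theory Submission
  imports Defs
begin

definition Pm :: "('n \<Rightarrow> 'n) \<Rightarrow> real^'n \<Rightarrow> real^'n" where
  "Pm \<sigma> x = (\<chi> k. x $ \<sigma> k)"

lemma prod_Basis_cart: "(\<Prod>b\<in>Basis. (w::real^'n) \<bullet> b) = (\<Prod>i\<in>UNIV. w $ i)"
  by (simp add: Basis_vec_def cart_eq_inner_axis axis_eq_axis prod.UNION_disjoint)

lemma all_Basis_cart: "(\<forall>b\<in>Basis. (l::real^'n) \<bullet> b \<le> u \<bullet> b) = (\<forall>i. l $ i \<le> u $ i)"
  by (auto simp add: Basis_vec_def cart_eq_inner_axis)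

lemma Pm_linear: "linear (Pm \<sigma>)"
  unfolding Pm_def by (auto intro!: linearI simp: vec_eq_iff)

lemma Pm_meas[measurable]: "Pm \<sigma> \<in> borel_measurable borel"
  by (intro borel_measurable_continuous_onI linear_continuous_on linear_conv_bounded_linear[THEN iffD1] Pm_linear)

lemma Pm_comp: "Pm \<sigma> (Pm \<tau> x) = Pm (\<tau> \<circ> \<sigma>) x"
  by (simp add: Pm_def vec_eq_iff)

lemma Pm_id: "Pm id x = x" by (simp add: Pm_def vec_eq_iff)

lemma lborel_Pm:
  fixes \<sigma> :: "'n::finite \<Rightarrow> 'n"
  assumes "bij \<sigma>"
  shows "lborel = distr lborel borel (Pm \<sigma>)"
proof (rule lborel_eqI)
  fix l u :: "real^'n"
  assume le: "\<And>b. b \<in> Basis \<Longrightarrow> l \<bullet> b \<le> u \<bullet> b"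
  have le': "\<forall>i. l $ i \<le> u $ i" using le all_Basis_cart by blast
  have eq: "Pm \<sigma> -` box l u = box (Pm (inv \<sigma>) l) (Pm (inv \<sigma>) u)"
  proof -
    have "x \<in> Pm \<sigma> -` box l u \<longleftrightarrow> x \<in> box (Pm (inv \<sigma>) l) (Pm (inv \<sigma>) u)" for x
    proof -
      have "x \<in> Pm \<sigma> -` box l u \<longleftrightarrow> (\<forall>i. l $ i < x $ \<sigma> i \<and> x $ \<sigma> i < u $ i)"
        by (simp add: mem_box_cart Pm_def)
      also have "\<dots> \<longleftrightarrow> (\<forall>m. l $ inv \<sigma> m < x $ m \<and> x $ m < u $ inv \<sigma> m)"
        by (metis assms bij_inv_eq_iff)
      finally show ?thesis by (simp add: mem_box_cart Pm_def)
    qed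
    then show ?thesis by blast
  qed
  have "emeasure (distr lborel borel (Pm \<sigma>)) (box l u) = emeasure lborel (box (Pm (inv \<sigma>) l) (Pm (inv \<sigma>) u))"
    by (simp add: emeasure_distr eq)
  also have "\<dots> = (\<Prod>i\<in>UNIV. u $ inv \<sigma> i - l $ inv \<sigma> i)"
    using le' by (simp add: emeasure_lborel_box_eq all_Basis_cart prod_Basis_cart Pm_def prod_ennreal)
  also have "(\<Prod>i\<in>UNIV. u $ inv \<sigma> i - l $ inv \<sigma> i) = (\<Prod>i\<in>UNIV. u $ i - l $ i)"
    using prod.reindex_bij_betw[of "inv \<sigma>" UNIV UNIV "\<lambda>i. u $ i - l $ i"] assms bij_imp_bij_inv[OF assms]
    by (metis bij_betw_def)
  also have "\<dots> = (\<Prod>b\<in>Basis. (u - l) \<bullet> b)"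
    by (simp add: prod_Basis_cart)
  finally show "emeasure (distr lborel borel (Pm \<sigma>)) (box l u) = (\<Prod>b\<in>Basis. (u - l) \<bullet> b)" .
qed simp

lemma change_gen:
  fixes f :: "'a::euclidean_space \<Rightarrow> real" and T S :: "'a \<Rightarrow> 'a"
  assumes T[measurable]: "T \<in> borel_measurable borel" and S[measurable]: "S \<in> borel_measurable borel"
    and TS: "\<And>x. T (S x) = x"
    and eq: "lborel = density (distr lborel borel T) (\<lambda>_. ennreal c)" and c: "0 \<le> c"
  shows "integral\<^sup>L lborel f = c * integral\<^sup>L lborel (\<lambda>x. f (T x))"
proof (cases "f \<in> borel_measurable borel")
  case True
  note [measurable] = True
  have "integral\<^sup>L lborel f = integral\<^sup>L (density (distr lborel borel T) (\<lambda>_. ennreal c)) f"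
    by (subst eq[symmetric]) (rule refl)
  also have "\<dots> = integral\<^sup>L (distr lborel borel T) (\<lambda>x. c * f x)"
    using c by (subst integral_density) auto
  also have "\<dots> = integral\<^sup>L lborel (\<lambda>x. c * f (T x))"
    by (subst integral_distr) auto
  also have "\<dots> = c * integral\<^sup>L lborel (\<lambda>x. f (T x))" by simp
  finally show ?thesis .
next
  case False
  have nm: "(\<lambda>x. f (T x)) \<notin> borel_measurable borel"
  proof
    assume a: "(\<lambda>x. f (T x)) \<in> borel_measurable borel"
    have "(\<lambda>x. f (T (S x))) \<in> borel_measurable borel"
      using measurable_compose[OF S a] by (simp add: o_def)
    then show False using False TS by simp
  qed
  have "\<not> integrable lborel f" using False borel_measurable_integrable by fastforce
  moreover have "\<not> integrable lborel (\<lambda>x. f (T x))" using nm borel_measurable_integrable by fastforce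
  ultimately show ?thesis by (simp add: not_integrable_integral_eq)
qed

definition gfun :: "'n::finite \<Rightarrow> 'n \<Rightarrow> real \<Rightarrow> real \<Rightarrow> real^'n \<Rightarrow> real" where
  "gfun i j s p z = norm (Imat i j *v z) powr p / norm z powr (real CARD('n) + s * p)"

definition DD :: "(real^'n::finite) set \<Rightarrow> (real^'n \<Rightarrow> real) \<Rightarrow> real" where
  "DD E g = (\<integral>x. indicator E x * (\<integral>y. indicator E y * g (x - y) \<partial>lborel) \<partial>lborel)"

lemma Wsp_eq: "Wsp_seminorm s p E (\<lambda>x. Imat i j *v x) = (DD E (gfun i j s p)) powr (1/p)"
  unfolding Wsp_seminorm_def DD_def gfun_def set_lebesgue_integral_def
  by (simp add: matrix_vector_mult_diff_distrib)

lemma DD_affine: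
  fixes H :: "(real^'n::finite) set"
  assumes a: "0 < a" and g: "\<And>z. g (a *\<^sub>R z) = k * g z"
  shows "DD ((\<lambda>x. a *\<^sub>R x + t) ` H) g = (a ^ CARD('n)) * (a ^ CARD('n)) * k * DD H g"
proof -
  define T where "T = (\<lambda>x::real^'n. a *\<^sub>R x + t)"
  define S where "S = (\<lambda>x::real^'n. (1/a) *\<^sub>R (x - t))"
  define c where "c = a ^ CARD('n)"
  have Tm[measurable]: "T \<in> borel_measurable borel" unfolding T_def by measurable
  have Sm[measurable]: "S \<in> borel_measurable borel" unfolding S_def by measurable
  have TS: "T (S x) = x" for x using a by (simp add: T_def S_def)
  have eq: "lborel = density (distr lborel borel T) (\<lambda>_. ennreal c)"
  proof -
    have "lborel = density (distr lborel borel (\<lambda>x::real^'n. t + a *\<^sub>R x)) (\<lambda>_. \<bar>a\<bar> ^ DIM(real^'n))"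
      using lborel_affine[of a t] a by simp
    moreover have "(\<lambda>x::real^'n. t + a *\<^sub>R x) = T" by (auto simp: T_def)
    ultimately show ?thesis using a by (simp add: c_def)
  qed
  have c0: "0 \<le> c" using a by (simp add: c_def)
  have ch: "integral\<^sup>L lborel f = c * integral\<^sup>L lborel (\<lambda>x. f (T x))" for f
    by (rule change_gen[OF Tm Sm TS eq c0])
  have injT: "inj T" using a by (auto simp: T_def inj_def)
  have ind: "indicator (T ` H) (T x) = (indicator H x :: real)" for x
    using injT by (simp add: indicator_def inj_image_mem_iff)
  have Tdiff: "T x - T y = a *\<^sub>R (x - y)" for x y by (simp add: T_def algebra_simps)
  have inner: "(\<integral>y. indicator (T ` H) y * g (T x - y) \<partial>lborel)
      = c * k * (\<integral>y. indicator H y * g (x - y) \<partial>lborel)" for x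
  proof -
    have "(\<integral>y. indicator (T ` H) y * g (T x - y) \<partial>lborel)
       = c * (\<integral>y. indicator (T ` H) (T y) * g (T x - T y) \<partial>lborel)"
      by (rule ch)
    also have "\<dots> = c * (\<integral>y. k * (indicator H y * g (x - y)) \<partial>lborel)"
      by (simp add: ind Tdiff g mult.left_commute)
    also have "\<dots> = c * k * (\<integral>y. indicator H y * g (x - y) \<partial>lborel)" by simp
    finally show ?thesis .
  qed
  have "DD (T ` H) g = c * (\<integral>x. indicator (T ` H) (T x) * (\<integral>y. indicator (T ` H) y * g (T x - y) \<partial>lborel) \<partial>lborel)"
    unfolding DD_def by (rule ch)
  also have "\<dots> = c * (\<integral>x. (c * k) * (indicator H x * (\<integral>y. indicator H y * g (x - y) \<partial>lborel)) \<partial>lborel)"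
    by (simp add: ind inner mult.left_commute)
  also have "\<dots> = c * c * k * DD H g" by (simp add: DD_def)
  finally show ?thesis by (simp add: T_def c_def)
qed

lemma DD_perm:
  fixes H :: "(real^'n::finite) set" and \<sigma> :: "'n \<Rightarrow> 'n"
  assumes b: "bij \<sigma>" and ind: "\<And>x. indicator H (Pm \<sigma> x) = (indicator H x :: real)"
    and g: "\<And>z. g (Pm \<sigma> z) = h z"
  shows "DD H g = DD H h"
proof -
  have Tm[measurable]: "Pm \<sigma> \<in> borel_measurable borel" by (rule Pm_meas)
  have Sm[measurable]: "Pm (inv \<sigma>) \<in> borel_measurable borel" by (rule Pm_meas)
  have TS: "Pm \<sigma> (Pm (inv \<sigma>) x) = x" for x
    using b by (simp add: Pm_def vec_eq_iff bij_is_inj inv_f_f)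
  have eq: "lborel = density (distr lborel borel (Pm \<sigma>)) (\<lambda>_. ennreal 1)"
    using lborel_Pm[OF b] by (simp add: density_1)
  have ch: "integral\<^sup>L lborel f = integral\<^sup>L lborel (\<lambda>x. f (Pm \<sigma> x))" for f :: "real^'n \<Rightarrow> real"
    using change_gen[OF Tm Sm TS eq] by simp
  have lin: "Pm \<sigma> x - Pm \<sigma> y = Pm \<sigma> (x - y)" for x y by (simp add: Pm_def vec_eq_iff)
  have inner: "(\<integral>y. indicator H y * g (Pm \<sigma> x - y) \<partial>lborel) = (\<integral>y. indicator H y * h (x - y) \<partial>lborel)" for x
    by (subst ch) (simp add: ind lin g)
  show ?thesis unfolding DD_def
    by (subst ch) (simp add: ind inner)
qed

lemma Imat_mult:
  assumes ij: "i \<noteq> j"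
  shows "(Imat i j *v x) $ k = (if k = i then x $ j else if k = j then - x $ i else 0)"
proof -
  have e: "Imat i j $ k $ m * x $ m = (if m = (if k = i then j else i) then (if k = i then x $ j else if k = j then - x $ i else 0) else 0)" for m
    using ij by (auto simp: Imat_def)
  have "(Imat i j *v x) $ k = (\<Sum>m\<in>UNIV. Imat i j $ k $ m * x $ m)"
    by (simp add: matrix_vector_mult_def)
  also have "\<dots> = (if k = i then x $ j else if k = j then - x $ i else 0)"
    unfolding e by (subst sum.delta) simp_all
  finally show ?thesis .
qed

lemma norm_Pm: "bij \<sigma> \<Longrightarrow> norm (Pm \<sigma> w) = norm w"
  unfolding norm_vec_def L2_set_def Pm_def
  using sum.reindex_bij_betw[of \<sigma> UNIV UNIV "\<lambda>i. (norm (w $ i))\<^sup>2"] by (simp add: bij_betw_def)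

lemma pnormN_Pm: "bij \<sigma> \<Longrightarrow> pnormN N (Pm \<sigma> w) = pnormN N w"
  unfolding pnormN_def Pm_def
  using sum.reindex_bij_betw[of \<sigma> UNIV UNIV "\<lambda>i. \<bar>w $ i\<bar> powr N"] by (simp add: bij_betw_def)

lemma gfun_perm:
  assumes b: "bij \<sigma>" and ij: "i \<noteq> j" and "i0 \<noteq> j0" and si: "\<sigma> i = i0" and sj: "\<sigma> j = j0"
  shows "gfun i j s p (Pm \<sigma> z) = gfun i0 j0 s p z"
proof -
  have "Imat i j *v Pm \<sigma> z = Pm \<sigma> (Imat i0 j0 *v z)"
  proof -
    have "(Imat i j *v Pm \<sigma> z) $ k = Pm \<sigma> (Imat i0 j0 *v z) $ k" for k
    proof -
      have inj: "\<sigma> k = \<sigma> m \<longleftrightarrow> k = m" for m using b by (simp add: bij_def inj_eq)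
      show ?thesis using ij assms(3) inj[of i] inj[of j]
        by (simp add: Imat_mult Pm_def si sj)
    qed
    then show ?thesis by (simp add: vec_eq_iff)
  qed
  then show ?thesis by (simp add: gfun_def norm_Pm[OF b])
qed

lemma gfun_scale:
  fixes i j :: "'n::finite"
  assumes a: "0 < a"
  shows "gfun i j s p (a *\<^sub>R z) = a powr (p - (real CARD('n::finite) + s * p)) * gfun i j s p z"
proof -
  have "norm (Imat i j *v (a *\<^sub>R z)) = a * norm (Imat i j *v z)"
    using a by (simp add: matrix_vector_mult_scaleR)
  moreover have "norm (a *\<^sub>R z) = a * norm z" using a by simp
  ultimately show ?thesis using a
    by (simp add: gfun_def powr_mult powr_diff)
qed

lemma exists_bij:
  fixes i j i0 j0 :: "'a"
  assumes "i \<noteq> j" "i0 \<noteq> j0"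
  shows "\<exists>\<sigma>. bij \<sigma> \<and> \<sigma> i = i0 \<and> \<sigma> j = j0"
proof -
  define j' where "j' = Transposition.transpose i i0 j"
  define \<sigma> where "\<sigma> = Transposition.transpose j' j0 \<circ> Transposition.transpose i i0"
  have "j' \<noteq> i0" using assms inj_transpose[of i i0] unfolding inj_def j'_def
    by (metis transpose_apply_first)
  then have "\<sigma> i = i0" using assms by (auto simp: \<sigma>_def transpose_def)
  moreover have "\<sigma> j = j0" by (simp add: \<sigma>_def j'_def)
  moreover have "bij \<sigma>" by (simp add: \<sigma>_def bij_comp)
  ultimately show ?thesis by blast
qed

lemma gfun_nonneg: "0 \<le> gfun i j s p z"
  by (simp add: gfun_def)

lemma DD_nonneg: "0 \<le> DD E (gfun i j s p)"
  unfolding DD_def by (auto intro!: mult_nonneg_nonneg integral_nonneg simp: gfun_nonneg)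

theorem lemma4p2:
  fixes s p N :: real
  assumes "CARD('n::{finite,linorder}) \<ge> 2"
    and "1 \<le> p" and "0 < s" and "s < 1" and "1 \<le> N"
  shows "\<exists>C::real. \<forall>(i::'n::{finite,linorder}) j (l::real) (q::real ^ 'n::{finite,linorder}).
           i < j \<longrightarrow> 0 < l \<longrightarrow>
           Wsp_seminorm s p (cellU N l q) (\<lambda>x. Imat i j *v x)
             = C * l powr (real CARD('n::{finite,linorder}) / p + 1 - s)"
proof -
  obtain a0 b0 :: 'n where ab: "a0 \<noteq> b0"
  proof -
    have "\<not> (\<forall>a b::'n. a = b)"
    proof
      assume h: "\<forall>a b::'n. a = b"
      then have "UNIV \<subseteq> {undefined::'n}" by auto
      then have "card (UNIV::'n set) \<le> card {undefined::'n}"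
        by (intro card_mono) auto
      then show False using assms(1) by simp
    qed
    then show ?thesis using that by blast
  qed
  define n where "n = real CARD('n)"
  define e where "e = n / p + 1 - s"
  define D0 where "D0 = DD (hatU N) (gfun a0 b0 s p)"
  have p0: "0 < p" using assms(2) by simp
  have D0: "0 \<le> D0" unfolding D0_def by (rule DD_nonneg)
  show ?thesis
  proof (intro exI[of _ "D0 powr (1/p) / 2 powr e"] allI impI)
    fix i j :: 'n and l :: real and q :: "(real, 'n) vec"
    assume ij: "i < j" and l: "0 < l"
    have ij': "i \<noteq> j" using ij by simp
    obtain \<sigma> where \<sigma>: "bij \<sigma>" "\<sigma> i = a0" "\<sigma> j = b0"
      using exists_bij[OF ij' ab] by blast
    have perm: "DD (hatU N) (gfun i j s p) = D0"
      unfolding D0_def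
    proof (rule DD_perm[OF \<sigma>(1)])
      show "indicator (hatU N) (Pm \<sigma> x) = (indicator (hatU N) x :: real)" for x
        by (simp add: hatU_def indicator_def pnormN_Pm[OF \<sigma>(1)])
      show "gfun i j s p (Pm \<sigma> z) = gfun a0 b0 s p z" for z
        by (rule gfun_perm[OF \<sigma>(1) ij' ab \<sigma>(2,3)])
    qed
    define a where "a = l / 2"
    have a: "0 < a" using l by (simp add: a_def)
    have "DD (cellU N l q) (gfun i j s p)
        = a ^ CARD('n) * a ^ CARD('n) * a powr (p - (n + s * p)) * DD (hatU N) (gfun i j s p)"
      unfolding cellU_def a_def[symmetric] n_def
      by (rule DD_affine[OF a]) (rule gfun_scale[OF a])
    also have "a ^ CARD('n) * a ^ CARD('n) * a powr (p - (n + s * p)) = a powr (n + p - s * p)"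
    proof -
      have "a ^ CARD('n) = a powr n" using a by (simp add: n_def powr_realpow)
      then have "a ^ CARD('n) * a ^ CARD('n) * a powr (p - (n + s * p)) = a powr n * a powr n * a powr (p - (n + s * p))"
        by simp
      also have "\<dots> = a powr (n + n + (p - (n + s * p)))" by (simp only: powr_add)
      also have "n + n + (p - (n + s * p)) = n + p - s * p" by simp
      finally show ?thesis .
    qed
    finally have DDc: "DD (cellU N l q) (gfun i j s p) = a powr (n + p - s * p) * D0"
      using perm by simp
    have "Wsp_seminorm s p (cellU N l q) (\<lambda>x. Imat i j *v x) = (a powr (n + p - s * p) * D0) powr (1/p)"
      by (simp add: Wsp_eq DDc)
    also have "\<dots> = a powr ((n + p - s * p) / p) * D0 powr (1/p)"
      using a D0 by (simp add: powr_mult powr_powr)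
    also have "(n + p - s * p) / p = e"
      using p0 by (simp add: e_def field_simps)
    also have "a powr e = l powr e / 2 powr e"
      using l by (simp add: a_def powr_divide)
    finally show "Wsp_seminorm s p (cellU N l q) (\<lambda>x. Imat i j *v x)
             = D0 powr (1/p) / 2 powr e * l powr (real CARD('n) / p + 1 - s)"
      by (simp add: e_def n_def)
  qed
qed

end
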